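(* Let $\eta,\sigma>0$, $\kappa>0$, $\rho\in(-1,1)$, $b<1$ with $b\ne0$, and $K=[\alpha,\beta]$ with $-\infty\le\alpha<\beta\le\infty$. Set $B_-=\frac{(1-b)\alpha-\eta}\sigma$ and $B_+=\frac{(1-b)\beta-\eta}\sigma$. Then for every $B\in\mathbb R$ a minimiser of $\lambda\mapsto2(1-b)\delta_K(\lambda)+(\eta+\lambda+\sigma\rho B)^2$ over $\lambda\in\mathbb R$ is $$\lambda^\ast(B)=[(1-b)\alpha-(\eta+\sigma\rho B)]\mathbf 1_{\{\rho B<B_-\}}+[(1-b)\beta-(\eta+\sigma\rho B)]\mathbf 1_{\{\rho B>B_+\}}.$$ Moreover, a function $B$ solves $$B'(\tau)=-\kappa B(\tau)+\tfrac12\sigma^2B(\tau)^2+\tfrac12\tfrac b{1-b}\inf_{\lambda\in\mathbb R}\Big(2(1-b)\delta_K(\lambda)+(\eta+\lambda+\sigma\rho B(\tau))^2\Big),\quad B(0)=0,$$ if and only if $B(0)=0$ and $$B'(\tau)=\big(-r_0^-+r_1^-B+\tfrac12r_2^-B^2\big)\mathbf 1_{\{\rho B<B_-\}}+\big(-r_0+r_1B+\tfrac12r_2B^2\big)\mathbf 1_{\{B_-\le\rho B\le B_+\}}+\big(-r_0^++r_1^+B+\tfrac12r_2^+B^2\big)\mathbf 1_{\{B_+<\rho B\}},$$ where $B=B(\tau)$ on the right-hand side.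
   Context: $\delta_K(x)=-\inf_{y\in K}xy=-\alpha x\mathbf 1_{\{x>0\}}-\beta x\mathbf 1_{\{x<0\}}$ is the support function of $K$. Coefficients: $r_0^-=\tfrac12 b\alpha((1-b)\alpha-2\eta)$, $r_1^-=b\sigma\rho\alpha-\kappa$, $r_2^-=\sigma^2$; $r_0=-\frac b{2(1-b)}\eta^2$, $r_1=\frac b{1-b}\eta\sigma\rho-\kappa$, $r_2=\sigma^2(1+\frac b{1-b}\rho^2)$; $r_0^+=\tfrac12 b\beta((1-b)\beta-2\eta)$, $r_1^+=b\sigma\rho\beta-\kappa$, $r_2^+=\sigma^2$. (These arise from a constrained CRRA portfolio problem in Heston's model, with $\eta$ the market-price-of-risk coefficient, $\kappa$ the mean-reversion speed, $\sigma$ the vol-of-vol and $\rho$ the correlation.) *)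

theory Defs
  imports "HOL-Analysis.Analysis"
begin

text \<open>K = [alpha, beta] with -infinity <= alpha < beta <= infinity, so alpha, beta are
extended reals. Support function delta_K(x) = - inf_{y in K} x y
= - alpha x 1_{x>0} - beta x 1_{x<0} (value +infinity allowed).\<close>

definition deltaK :: "ereal \<Rightarrow> ereal \<Rightarrow> real \<Rightarrow> ereal" where
  "deltaK \<alpha> \<beta> x =
     (if x > 0 then - (\<alpha> * ereal x) else if x < 0 then - (\<beta> * ereal x) else 0)"

definition objK :: "ereal \<Rightarrow> ereal \<Rightarrow> real \<Rightarrow> real \<Rightarrow> real \<Rightarrow> real \<Rightarrow> real \<Rightarrow> real \<Rightarrow> ereal" where
  "objK \<alpha> \<beta> \<eta> \<sigma> \<rho> b B l =
     ereal (2 * (1 - b)) * deltaK \<alpha> \<beta> l + ereal ((\<eta> + l + \<sigma> * \<rho> * B)^2)"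

definition Bminus :: "ereal \<Rightarrow> real \<Rightarrow> real \<Rightarrow> real \<Rightarrow> ereal" where
  "Bminus \<alpha> \<eta> \<sigma> b = (ereal (1 - b) * \<alpha> - ereal \<eta>) / ereal \<sigma>"

definition Bplus :: "ereal \<Rightarrow> real \<Rightarrow> real \<Rightarrow> real \<Rightarrow> ereal" where
  "Bplus \<beta> \<eta> \<sigma> b = (ereal (1 - b) * \<beta> - ereal \<eta>) / ereal \<sigma>"

text \<open>In each branch the relevant endpoint is finite
(rho B < B_- forces alpha > -infinity, rho B > B_+ forces beta < infinity), so
real_of_ereal there is the endpoint itself; a false indicator kills the term.\<close>
definition lamstar :: "ereal \<Rightarrow> ereal \<Rightarrow> real \<Rightarrow> real \<Rightarrow> real \<Rightarrow> real \<Rightarrow> real \<Rightarrow> real" where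
  "lamstar \<alpha> \<beta> \<eta> \<sigma> \<rho> b B =
     (if ereal (\<rho> * B) < Bminus \<alpha> \<eta> \<sigma> b
        then (1 - b) * real_of_ereal \<alpha> - (\<eta> + \<sigma> * \<rho> * B) else 0)
   + (if ereal (\<rho> * B) > Bplus \<beta> \<eta> \<sigma> b
        then (1 - b) * real_of_ereal \<beta> - (\<eta> + \<sigma> * \<rho> * B) else 0)"

definition r0m :: "real \<Rightarrow> real \<Rightarrow> real \<Rightarrow> real" where
  "r0m \<alpha> \<eta> b = 1/2 * b * \<alpha> * ((1 - b) * \<alpha> - 2 * \<eta>)"
definition r1m :: "real \<Rightarrow> real \<Rightarrow> real \<Rightarrow> real \<Rightarrow> real \<Rightarrow> real" where
  "r1m \<alpha> \<sigma> \<rho> \<kappa> b = b * \<sigma> * \<rho> * \<alpha> - \<kappa>"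
definition r2m :: "real \<Rightarrow> real" where
  "r2m \<sigma> = \<sigma>^2"

definition r0 :: "real \<Rightarrow> real \<Rightarrow> real" where
  "r0 \<eta> b = - (b / (2 * (1 - b))) * \<eta>^2"
definition r1 :: "real \<Rightarrow> real \<Rightarrow> real \<Rightarrow> real \<Rightarrow> real \<Rightarrow> real" where
  "r1 \<eta> \<sigma> \<rho> \<kappa> b = b / (1 - b) * \<eta> * \<sigma> * \<rho> - \<kappa>"
definition r2 :: "real \<Rightarrow> real \<Rightarrow> real \<Rightarrow> real" where
  "r2 \<sigma> \<rho> b = \<sigma>^2 * (1 + b / (1 - b) * \<rho>^2)"

definition r0p :: "real \<Rightarrow> real \<Rightarrow> real \<Rightarrow> real" where
  "r0p \<beta> \<eta> b = 1/2 * b * \<beta> * ((1 - b) * \<beta> - 2 * \<eta>)"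
definition r1p :: "real \<Rightarrow> real \<Rightarrow> real \<Rightarrow> real \<Rightarrow> real \<Rightarrow> real" where
  "r1p \<beta> \<sigma> \<rho> \<kappa> b = b * \<sigma> * \<rho> * \<beta> - \<kappa>"
definition r2p :: "real \<Rightarrow> real" where
  "r2p \<sigma> = \<sigma>^2"

text \<open>Right-hand side of the original ODE (extended-real valued because of the infimum).\<close>
definition rhs_inf :: "ereal \<Rightarrow> ereal \<Rightarrow> real \<Rightarrow> real \<Rightarrow> real \<Rightarrow> real \<Rightarrow> real \<Rightarrow> real \<Rightarrow> ereal" where
  "rhs_inf \<alpha> \<beta> \<eta> \<sigma> \<rho> \<kappa> b x =
     ereal (- \<kappa> * x + 1/2 * \<sigma>^2 * x^2)
     + ereal (1/2 * (b / (1 - b))) * (INF l::real. objK \<alpha> \<beta> \<eta> \<sigma> \<rho> b x l)"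

definition rhs_pw :: "ereal \<Rightarrow> ereal \<Rightarrow> real \<Rightarrow> real \<Rightarrow> real \<Rightarrow> real \<Rightarrow> real \<Rightarrow> real \<Rightarrow> real" where
  "rhs_pw \<alpha> \<beta> \<eta> \<sigma> \<rho> \<kappa> b x =
     (if ereal (\<rho> * x) < Bminus \<alpha> \<eta> \<sigma> b
        then - r0m (real_of_ereal \<alpha>) \<eta> b + r1m (real_of_ereal \<alpha>) \<sigma> \<rho> \<kappa> b * x
             + 1/2 * r2m \<sigma> * x^2 else 0)
   + (if Bminus \<alpha> \<eta> \<sigma> b \<le> ereal (\<rho> * x) \<and> ereal (\<rho> * x) \<le> Bplus \<beta> \<eta> \<sigma> b
        then - r0 \<eta> b + r1 \<eta> \<sigma> \<rho> \<kappa> b * x + 1/2 * r2 \<sigma> \<rho> b * x^2 else 0)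
   + (if Bplus \<beta> \<eta> \<sigma> b < ereal (\<rho> * x)
        then - r0p (real_of_ereal \<beta>) \<eta> b + r1p (real_of_ereal \<beta>) \<sigma> \<rho> \<kappa> b * x
             + 1/2 * r2p \<sigma> * x^2 else 0)"

end

theory Submission imports Defs begin

lemma sqlow: "(A::real)*a*(2*c - A*a) \<le> 2*A*(-a*l) + (c+l)^2"
proof -
  have "0 \<le> (c+l-A*a)^2" by simp
  thus ?thesis by (simp add: power2_eq_square algebra_simps)
qed

lemma midpos: "(A::real)*a \<le> c \<Longrightarrow> l > 0 \<Longrightarrow> c^2 \<le> 2*A*(-a*l) + (c+l)^2"
proof -
  assume h: "A*a \<le> c" "l > 0"
  have "0 \<le> 2*l*(c - A*a) + l*l" using h by (simp add: mult_nonneg_nonneg)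
  thus ?thesis by (simp add: power2_eq_square algebra_simps)
qed

lemma midneg: "c \<le> (A::real)*bb \<Longrightarrow> l < 0 \<Longrightarrow> c^2 \<le> 2*A*(-bb*l) + (c+l)^2"
proof -
  assume h: "c \<le> A*bb" "l < 0"
  have "0 \<le> 2*(-l)*(A*bb - c) + l*l" using h by (simp add: mult_nonneg_nonneg)
  thus ?thesis by (simp add: power2_eq_square algebra_simps)
qed

lemma core:
  fixes \<eta> \<sigma> \<kappa> \<rho> b :: real and \<alpha> \<beta> :: ereal
  assumes "\<sigma> > 0" and "b < 1" and "\<alpha> < \<beta>"
  defines "A \<equiv> 1 - b" and "a \<equiv> real_of_ereal \<alpha>" and "bb \<equiv> real_of_ereal \<beta>"
  defines "V \<equiv> \<lambda>x. (if \<alpha> \<noteq> -\<infinity> \<and> \<eta> + \<sigma>*\<rho>*x < A*a then A*a*(2*(\<eta> + \<sigma>*\<rho>*x) - A*a)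
      else if \<beta> \<noteq> \<infinity> \<and> A*bb < \<eta> + \<sigma>*\<rho>*x then A*bb*(2*(\<eta> + \<sigma>*\<rho>*x) - A*bb)
      else (\<eta> + \<sigma>*\<rho>*x)^2)"
  shows "objK \<alpha> \<beta> \<eta> \<sigma> \<rho> b x (lamstar \<alpha> \<beta> \<eta> \<sigma> \<rho> b x) = ereal (V x)"
    and "ereal (V x) \<le> objK \<alpha> \<beta> \<eta> \<sigma> \<rho> b x l"
    and "rhs_pw \<alpha> \<beta> \<eta> \<sigma> \<rho> \<kappa> b x = - \<kappa> * x + 1/2 * \<sigma>^2 * x^2 + 1/2 * (b / A) * V x"
proof -
  define c where "c = \<eta> + \<sigma>*\<rho>*x"
  have A: "A > 0" using assms(2) by (simp add: A_def)
  have anotp: "\<alpha> \<noteq> \<infinity>" using assms(3) by auto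
  have bnotm: "\<beta> \<noteq> -\<infinity>" using assms(3) by auto
  have afin: "\<alpha> \<noteq> -\<infinity> \<Longrightarrow> \<alpha> = ereal a" using anotp by (cases \<alpha>) (auto simp: a_def)
  have bfin: "\<beta> \<noteq> \<infinity> \<Longrightarrow> \<beta> = ereal bb" using bnotm by (cases \<beta>) (auto simp: bb_def)
  have ab: "\<alpha> \<noteq> -\<infinity> \<Longrightarrow> \<beta> \<noteq> \<infinity> \<Longrightarrow> a < bb" using afin bfin assms(3) by force
  have R1: "ereal (\<rho>*x) < Bminus \<alpha> \<eta> \<sigma> b \<longleftrightarrow> (\<alpha> \<noteq> -\<infinity> \<and> c < A*a)"
  proof (cases "\<alpha> = -\<infinity>")
    case True
    then show ?thesis using assms(1,2) by (simp add: Bminus_def)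
  next
    case False
    then have "Bminus \<alpha> \<eta> \<sigma> b = ereal ((A*a - \<eta>)/\<sigma>)"
      using afin assms(1) by (simp add: Bminus_def A_def)
    then show ?thesis using False assms(1) by (simp add: pos_less_divide_eq c_def algebra_simps)
  qed
  have R3: "Bplus \<beta> \<eta> \<sigma> b < ereal (\<rho>*x) \<longleftrightarrow> (\<beta> \<noteq> \<infinity> \<and> A*bb < c)"
  proof (cases "\<beta> = \<infinity>")
    case True
    then show ?thesis using assms(1,2) by (simp add: Bplus_def)
  next
    case False
    then have "Bplus \<beta> \<eta> \<sigma> b = ereal ((A*bb - \<eta>)/\<sigma>)"
      using bfin assms(1) by (simp add: Bplus_def A_def)
    then show ?thesis using False assms(1) by (simp add: pos_divide_less_eq c_def algebra_simps)
  qed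
  have excl: "\<not> ((\<alpha> \<noteq> -\<infinity> \<and> c < A*a) \<and> (\<beta> \<noteq> \<infinity> \<and> A*bb < c))"
  proof
    assume h: "(\<alpha> \<noteq> -\<infinity> \<and> c < A*a) \<and> (\<beta> \<noteq> \<infinity> \<and> A*bb < c)"
    then have "a < bb" using ab by blast
    then have "A*a < A*bb" using A by simp
    then show False using h by linarith
  qed
  have Vc: "V x = (if \<alpha> \<noteq> -\<infinity> \<and> c < A*a then A*a*(2*c - A*a)
      else if \<beta> \<noteq> \<infinity> \<and> A*bb < c then A*bb*(2*c - A*bb) else c^2)"
    by (simp add: V_def c_def)
  have lam: "lamstar \<alpha> \<beta> \<eta> \<sigma> \<rho> b x = (if \<alpha> \<noteq> -\<infinity> \<and> c < A*a then A*a - c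
      else if \<beta> \<noteq> \<infinity> \<and> A*bb < c then A*bb - c else 0)"
    using R1 R3 excl by (auto simp: lamstar_def A_def a_def bb_def c_def)
  have dpos: "\<And>l. l > 0 \<Longrightarrow> deltaK \<alpha> \<beta> l = (if \<alpha> = -\<infinity> then \<infinity> else ereal (-a*l))"
    using afin by (auto simp: deltaK_def)
  have dneg: "\<And>l. l < 0 \<Longrightarrow> deltaK \<alpha> \<beta> l = (if \<beta> = \<infinity> then \<infinity> else ereal (-bb*l))"
    using bfin by (auto simp: deltaK_def)
  have d0: "deltaK \<alpha> \<beta> 0 = 0" by (simp add: deltaK_def)
  have objf: "\<And>l d. deltaK \<alpha> \<beta> l = ereal d \<Longrightarrow> objK \<alpha> \<beta> \<eta> \<sigma> \<rho> b x l = ereal (2*A*d + (c+l)^2)"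
    by (simp add: objK_def A_def c_def add_ac)
  have obji: "\<And>l. deltaK \<alpha> \<beta> l = \<infinity> \<Longrightarrow> objK \<alpha> \<beta> \<eta> \<sigma> \<rho> b x l = \<infinity>"
    using A by (simp add: objK_def A_def)
  show "objK \<alpha> \<beta> \<eta> \<sigma> \<rho> b x (lamstar \<alpha> \<beta> \<eta> \<sigma> \<rho> b x) = ereal (V x)"
  proof (cases "\<alpha> \<noteq> -\<infinity> \<and> c < A*a")
    case True
    then have "deltaK \<alpha> \<beta> (A*a - c) = ereal (-a*(A*a-c))" using dpos[of "A*a-c"] by simp
    from objf[OF this] True show ?thesis
      by (simp add: lam Vc power2_eq_square algebra_simps)
  next
    case F1: False
    show ?thesis
    proof (cases "\<beta> \<noteq> \<infinity> \<and> A*bb < c")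
      case True
      then have "deltaK \<alpha> \<beta> (A*bb - c) = ereal (-bb*(A*bb-c))" using dneg[of "A*bb-c"] by simp
      from objf[OF this] True show ?thesis
        unfolding lam Vc if_not_P[OF F1] if_P[OF True]
        by (simp add: power2_eq_square algebra_simps)
    next
      case False
      from objf[of 0 0] d0 show ?thesis
        unfolding lam Vc if_not_P[OF F1] if_not_P[OF False] by (simp add: zero_ereal_def)
    qed
  qed
  show "ereal (V x) \<le> objK \<alpha> \<beta> \<eta> \<sigma> \<rho> b x l"
  proof (cases "l > 0")
    case lp: True
    show ?thesis
    proof (cases "\<alpha> = -\<infinity>")
      case True then show ?thesis using obji dpos lp by simp
    next
      case af: False
      have o: "objK \<alpha> \<beta> \<eta> \<sigma> \<rho> b x l = ereal (2*A*(-a*l) + (c+l)^2)"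
        using objf dpos lp af by simp
      have "V x \<le> 2*A*(-a*l) + (c+l)^2"
      proof (cases "c < A*a")
        case True then show ?thesis using af sqlow[of A a c l] by (simp add: Vc)
      next
        case ca: False
        show ?thesis
        proof (cases "\<beta> \<noteq> \<infinity> \<and> A*bb < c")
          case True
          then have "a < bb" using ab af by blast
          then have "2*A*(-bb*l) \<le> 2*A*(-a*l)" using A lp by (simp add: mult_left_mono)
          then show ?thesis using True af ca sqlow[of A bb c l] by (simp add: Vc)
        next
          case False then show ?thesis using ca af midpos[of A a c l] lp
            unfolding Vc if_not_P[OF False] by simp
        qed
      qed
      then show ?thesis using o by simp
    qed
  next
    case lnp: False
    show ?thesis
    proof (cases "l < 0")
      case ln: True
      show ?thesis
      proof (cases "\<beta> = \<infinity>")
        case True then show ?thesis using obji dneg ln by simp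
      next
        case bf: False
        have o: "objK \<alpha> \<beta> \<eta> \<sigma> \<rho> b x l = ereal (2*A*(-bb*l) + (c+l)^2)"
          using objf dneg ln bf by simp
        have "V x \<le> 2*A*(-bb*l) + (c+l)^2"
        proof (cases "\<alpha> \<noteq> -\<infinity> \<and> c < A*a")
          case True
          then have "a < bb" using ab bf by blast
          then have "2*A*(-a*l) \<le> 2*A*(-bb*l)" using A ln
            by (simp add: mult_left_mono mult_right_mono_neg)
          then show ?thesis using True sqlow[of A a c l] by (simp add: Vc)
        next
          case F1: False
          show ?thesis
          proof (cases "A*bb < c")
            case True then show ?thesis using bf sqlow[of A bb c l]
              unfolding Vc if_not_P[OF F1] by simp
          next
            case False then show ?thesis using bf midneg[of c A bb l] ln
              unfolding Vc if_not_P[OF F1] by simp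
          qed
        qed
        then show ?thesis using o by simp
      qed
    next
      case False
      then have l0: "l = 0" using lnp by simp
      have o: "objK \<alpha> \<beta> \<eta> \<sigma> \<rho> b x l = ereal (c^2)"
        using objf[of 0 0] d0 l0 by (simp add: zero_ereal_def)
      have "V x \<le> c^2"
        using sqlow[of A a c 0] sqlow[of A bb c 0] by (simp add: Vc)
      then show ?thesis using o by simp
    qed
  qed
  show "rhs_pw \<alpha> \<beta> \<eta> \<sigma> \<rho> \<kappa> b x = - \<kappa> * x + 1/2 * \<sigma>^2 * x^2 + 1/2 * (b / A) * V x"
  proof -
    have mid: "(Bminus \<alpha> \<eta> \<sigma> b \<le> ereal (\<rho> * x) \<and> ereal (\<rho> * x) \<le> Bplus \<beta> \<eta> \<sigma> b)
       \<longleftrightarrow> \<not> (\<alpha> \<noteq> -\<infinity> \<and> c < A*a) \<and> \<not> (\<beta> \<noteq> \<infinity> \<and> A*bb < c)"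
      using R1 R3 by (auto simp: not_less)
    have Ab: "A \<noteq> 0" using A by simp
    show ?thesis
      unfolding rhs_pw_def mid R1 R3 using excl Ab
      by (auto simp: Vc c_def r0m_def r1m_def r2m_def r0_def r1_def r2_def r0p_def r1p_def r2p_def
          a_def[symmetric] bb_def[symmetric] A_def[symmetric] field_simps power2_eq_square)
  qed
qed
theorem lemma2p3:
  fixes \<eta> \<sigma> \<kappa> \<rho> b :: real and \<alpha> \<beta> :: ereal
  assumes "\<eta> > 0" and "\<sigma> > 0" and "\<kappa> > 0" and "-1 < \<rho>" and "\<rho> < 1"
    and "b < 1" and "b \<noteq> 0" and "\<alpha> < \<beta>"
  shows "(\<forall>B l. objK \<alpha> \<beta> \<eta> \<sigma> \<rho> b B (lamstar \<alpha> \<beta> \<eta> \<sigma> \<rho> b B)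
                  \<le> objK \<alpha> \<beta> \<eta> \<sigma> \<rho> b B l)
    \<and> (\<forall>(T::real) (Bf::real \<Rightarrow> real). T > 0 \<longrightarrow>
         ((Bf 0 = 0 \<and> (\<forall>\<tau>\<in>{0..T}. \<exists>D. (Bf has_real_derivative D) (at \<tau> within {0..T})
                \<and> ereal D = rhs_inf \<alpha> \<beta> \<eta> \<sigma> \<rho> \<kappa> b (Bf \<tau>)))
          \<longleftrightarrow>
          (Bf 0 = 0 \<and> (\<forall>\<tau>\<in>{0..T}.
                (Bf has_real_derivative rhs_pw \<alpha> \<beta> \<eta> \<sigma> \<rho> \<kappa> b (Bf \<tau>)) (at \<tau> within {0..T})))))"
proof -
  note C = core[OF assms(2) assms(6) assms(8)]
  have P1: "\<forall>B l. objK \<alpha> \<beta> \<eta> \<sigma> \<rho> b B (lamstar \<alpha> \<beta> \<eta> \<sigma> \<rho> b B)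
                  \<le> objK \<alpha> \<beta> \<eta> \<sigma> \<rho> b B l"
    using C(1) C(2) by metis
  have R: "rhs_inf \<alpha> \<beta> \<eta> \<sigma> \<rho> \<kappa> b x = ereal (rhs_pw \<alpha> \<beta> \<eta> \<sigma> \<rho> \<kappa> b x)" for x
  proof -
    have "(INF l::real. objK \<alpha> \<beta> \<eta> \<sigma> \<rho> b x l)
        = objK \<alpha> \<beta> \<eta> \<sigma> \<rho> b x (lamstar \<alpha> \<beta> \<eta> \<sigma> \<rho> b x)"
      by (rule antisym) (auto intro: INF_lower INF_greatest P1[rule_format])
    moreover have "\<exists>v. objK \<alpha> \<beta> \<eta> \<sigma> \<rho> b x (lamstar \<alpha> \<beta> \<eta> \<sigma> \<rho> b x) = ereal v
       \<and> rhs_pw \<alpha> \<beta> \<eta> \<sigma> \<rho> \<kappa> b x = - \<kappa> * x + 1/2 * \<sigma>^2 * x^2 + 1/2 * (b / (1-b)) * v"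
      using C(1)[where \<eta>=\<eta> and \<rho>=\<rho> and x=x] C(3)[where \<eta>=\<eta> and \<rho>=\<rho> and x=x and \<kappa>=\<kappa>] by blast
    then obtain v where "objK \<alpha> \<beta> \<eta> \<sigma> \<rho> b x (lamstar \<alpha> \<beta> \<eta> \<sigma> \<rho> b x) = ereal v"
       "rhs_pw \<alpha> \<beta> \<eta> \<sigma> \<rho> \<kappa> b x = - \<kappa> * x + 1/2 * \<sigma>^2 * x^2 + 1/2 * (b / (1-b)) * v"
      by blast
    ultimately show ?thesis unfolding rhs_inf_def by simp
  qed
  show ?thesis using P1 by (auto simp: R)
qed

end
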